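(* The center of the formal Burau group $\mathcal{B}$ is generated by $\beta(\Delta)$, where $\Delta=(\sigma_1\sigma_2\sigma_1)^2$. In particular, $Z(\mathcal{B})=Z(\beta(B_3))$.
   Context: Let $B_3$ be the braid group with standard generators $\sigma_1,\sigma_2$ and $\beta$ the Burau representation $\beta(\sigma_1)=\begin{pmatrix}1-t&t&0\\1&0&0\\0&0&1\end{pmatrix}$, $\beta(\sigma_2)=\begin{pmatrix}1&0&0\\0&1-t&t\\0&1&0\end{pmatrix}$. For a matrix $A$ with Laurent polynomial entries, $\overline{A}$ denotes substitution $t\mapsto t^{-1}$ in every entry. Let $J_3=\begin{pmatrix}1&-t^{-1}&-t^{-1}\\-t&1&-t^{-1}\\-t&-t&1\end{pmatrix}$, $v=(t,t^2,t^3)$ (a row vector), $\vec{1}=(1,1,1)^T$, and the formal Burau group $\mathcal{B}=\{A\in\mathrm{GL}(3,\mathbb{Z}[t,t^{-1}]) : vA=v,\ A\vec 1=\vec 1,\ \overline{A}J_3A^T=J_3\}$. *)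

theory Defs
  imports "HOL-Analysis.Analysis" "HOL-Library.Poly_Mapping"
begin

text \<open>Laurent polynomials Z[t,t^-1] realised as the group ring of (int,+) with integer
  coefficients: finitely supported functions int to int with convolution product.
  The monomial t^k is the finitely supported function single k 1.\<close>

type_synonym laurent = "int \<Rightarrow>\<^sub>0 int"

definition lt :: laurent where "lt = Poly_Mapping.single 1 1"
definition lt_inv :: laurent where "lt_inv = Poly_Mapping.single (-1) 1"

lift_definition lbar :: "laurent \<Rightarrow> laurent" is "\<lambda>p k. p (- k)"
proof -
  fix p :: "int \<Rightarrow> int"
  assume "finite {x. p x \<noteq> 0}"
  hence "finite (uminus ` {x. p x \<noteq> 0})" by simp
  moreover have "{k. p (- k) \<noteq> 0} = uminus ` {x. p x \<noteq> 0}"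
    by (auto intro: image_eqI[where x = "- _"])
  ultimately show "finite {k. p (- k) \<noteq> 0}" by simp
qed

type_synonym lmat = "laurent ^ 3 ^ 3"

definition mat_bar :: "lmat \<Rightarrow> lmat" where
  "mat_bar A = (\<chi> i j. lbar (A $ i $ j))"

definition mat3 :: "laurent \<Rightarrow> laurent \<Rightarrow> laurent \<Rightarrow> laurent \<Rightarrow> laurent \<Rightarrow> laurent
   \<Rightarrow> laurent \<Rightarrow> laurent \<Rightarrow> laurent \<Rightarrow> lmat" where
  "mat3 a b c d e f g h k = vector [vector [a, b, c], vector [d, e, f], vector [g, h, k]]"

definition burau_s1 :: lmat where
  "burau_s1 = mat3 (1 - lt) lt 0  1 0 0  0 0 1"

definition burau_s2 :: lmat where
  "burau_s2 = mat3 1 0 0  0 (1 - lt) lt  0 1 0"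

definition burau_Delta :: lmat where
  "burau_Delta = (burau_s1 ** burau_s2 ** burau_s1) ** (burau_s1 ** burau_s2 ** burau_s1)"

definition J3 :: lmat where
  "J3 = mat3 1 (- lt_inv) (- lt_inv)  (- lt) 1 (- lt_inv)  (- lt) (- lt) 1"

definition vrow :: "laurent ^ 3" where "vrow = vector [lt, lt ^ 2, lt ^ 3]"
definition ones3 :: "laurent ^ 3" where "ones3 = vector [1, 1, 1]"

definition formal_burau :: "lmat set" where
  "formal_burau = {A. invertible A \<and> vrow v* A = vrow \<and> A *v ones3 = ones3
                      \<and> mat_bar A ** J3 ** transpose A = J3}"

inductive_set gen_subgroup :: "lmat set \<Rightarrow> lmat set" for S where
  gen_one: "mat 1 \<in> gen_subgroup S"
| gen_elem: "s \<in> S \<Longrightarrow> s \<in> gen_subgroup S"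
| gen_mult: "a \<in> gen_subgroup S \<Longrightarrow> b \<in> gen_subgroup S \<Longrightarrow> a ** b \<in> gen_subgroup S"
| gen_inv: "a \<in> gen_subgroup S \<Longrightarrow> a ** b = mat 1 \<Longrightarrow> b ** a = mat 1 \<Longrightarrow> b \<in> gen_subgroup S"

definition mat_center :: "lmat set \<Rightarrow> lmat set" where
  "mat_center G = {A \<in> G. \<forall>X \<in> G. A ** X = X ** A}"

end

theory Submission
  imports Defs
begin


lemma mat3_nth [simp]:
  "mat3 a b c d e f g h k $ 1 $ 1 = a" "mat3 a b c d e f g h k $ 1 $ 2 = b" "mat3 a b c d e f g h k $ 1 $ 3 = c"
  "mat3 a b c d e f g h k $ 2 $ 1 = d" "mat3 a b c d e f g h k $ 2 $ 2 = e" "mat3 a b c d e f g h k $ 2 $ 3 = f"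
  "mat3 a b c d e f g h k $ 3 $ 1 = g" "mat3 a b c d e f g h k $ 3 $ 2 = h" "mat3 a b c d e f g h k $ 3 $ 3 = k"
  by (simp_all add: mat3_def)

lemma mm3: "((A::'a::semiring_1^'n^'m) ** (B::'a^'p^'n::{finite})) $ i $ j = (\<Sum>k\<in>UNIV. A$i$k * B$k$j)"
  by (simp add: matrix_matrix_mult_def)

lemma mm33: "((A::'a::semiring_1^3^'m) ** B) $ i $ j = A$i$1 * B$1$j + A$i$2 * B$2$j + A$i$3 * B$3$j"
  by (simp add: matrix_matrix_mult_def sum_3)

lemma s1_right:
  "(A ** burau_s1) $ i $ 1 = A$i$1 * (1 - lt) + A$i$2"
  "(A ** burau_s1) $ i $ 2 = A$i$1 * lt"
  "(A ** burau_s1) $ i $ 3 = A$i$3"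
  by (simp_all add: mm33 burau_s1_def)
lemma s1_left:
  "(burau_s1 ** A) $ 1 $ j = (1 - lt) * A$1$j + lt * A$2$j"
  "(burau_s1 ** A) $ 2 $ j = A$1$j"
  "(burau_s1 ** A) $ 3 $ j = A$3$j"
  by (simp_all add: mm33 burau_s1_def)
lemma s2_right:
  "(A ** burau_s2) $ i $ 1 = A$i$1"
  "(A ** burau_s2) $ i $ 2 = A$i$2 * (1 - lt) + A$i$3"
  "(A ** burau_s2) $ i $ 3 = A$i$2 * lt"
  by (simp_all add: mm33 burau_s2_def)
lemma s2_left:
  "(burau_s2 ** A) $ 1 $ j = A$1$j"
  "(burau_s2 ** A) $ 2 $ j = (1 - lt) * A$2$j + lt * A$3$j"
  "(burau_s2 ** A) $ 3 $ j = A$2$j"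
  by (simp_all add: mm33 burau_s2_def)

definition uvec :: "laurent ^ 3" where "uvec = vector [1, lt, lt^2]"
definition Mf :: "laurent \<Rightarrow> laurent \<Rightarrow> lmat" where
  "Mf l x = (\<chi> i j. (if i = j then l else 0) + x * uvec $ j)"

lemma mat_eq3: "(A::'a^3^3) = B \<longleftrightarrow>
  A$1$1 = B$1$1 \<and> A$1$2 = B$1$2 \<and> A$1$3 = B$1$3 \<and>
  A$2$1 = B$2$1 \<and> A$2$2 = B$2$2 \<and> A$2$3 = B$2$3 \<and>
  A$3$1 = B$3$1 \<and> A$3$2 = B$3$2 \<and> A$3$3 = B$3$3"
  by (simp add: vec_eq_iff forall_3)

lemma commute_form:
  fixes A :: lmat
  assumes c1: "A ** burau_s1 = burau_s1 ** A" and c2: "A ** burau_s2 = burau_s2 ** A"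
  shows "A = Mf (A$1$1 - A$2$1) (A$2$1)"
proof -
  have e1: "(A ** burau_s1)$i$j = (burau_s1 ** A)$i$j" for i j using c1 by simp
  have e2: "(A ** burau_s2)$i$j = (burau_s2 ** A)$i$j" for i j using c2 by simp
  have a32: "A$3$2 = lt * A$3$1" using e1[of 3 1] by (simp add: s1_right s1_left algebra_simps)
  have a12: "A$1$2 = lt * A$2$1" using e1[of 2 2] by (simp add: s1_right s1_left algebra_simps)
  have a23: "A$2$3 = A$1$3" using e1[of 2 3] by (simp add: s1_right s1_left algebra_simps)
  have a11: "A$1$1 = A$2$1 * (1 - lt) + A$2$2" using e1[of 2 1] by (simp add: s1_right s1_left)
  have a13: "A$1$3 = lt * A$1$2" using e2[of 1 3] by (simp add: s2_right s2_left algebra_simps)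
  have a31: "A$3$1 = A$2$1" using e2[of 3 1] by (simp add: s2_right s2_left)
  have a22: "A$2$2 = A$3$2 * (1 - lt) + A$3$3" using e2[of 3 2] by (simp add: s2_right s2_left)
  have a33: "A$2$3 = A$3$2 * lt" using e2[of 3 3] by (simp add: s2_right s2_left)
  show ?thesis unfolding mat_eq3
    by (simp add: Mf_def uvec_def a32 a12 a23 a11 a13 a31 a22 a33 algebra_simps power2_eq_square)
qed

lemma lt_inv_mult [simp]: "lt * lt_inv = 1" "lt_inv * lt = 1"
  by (simp_all add: lt_def lt_inv_def mult_single)

lemma lt_nz [simp]: "lt \<noteq> 0" using lt_inv_mult(1) by force

lemma lbar_simps [simp]:
  "lbar 0 = 0" "lbar 1 = 1" "lbar lt = lt_inv" "lbar lt_inv = lt"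
  "lbar (a + b) = lbar a + lbar b" "lbar (a - b) = lbar a - lbar b" "lbar (- a) = - lbar a"
  by (transfer, auto simp: when_def lt_def lt_inv_def)+


lemma mat1_nth [simp]: "(mat 1 :: lmat) $ i $ j = (if i = j then 1 else 0)"
  by (simp add: mat_def)

lemma mv3: "((A::'a::semiring_1^3^'m) *v v) $ i = A$i$1 * v$1 + A$i$2 * v$2 + A$i$3 * v$3"
  by (simp add: matrix_vector_mult_def sum_3)
lemma vm3: "((v::'a::semiring_1^3) v* (A::'a^'n^3)) $ j = v$1 * A$1$j + v$2 * A$2$j + v$3 * A$3$j"
  by (simp add: vector_matrix_mult_def sum_3)

lemma vec_eq3: "(x::'a^3) = y \<longleftrightarrow> x$1 = y$1 \<and> x$2 = y$2 \<and> x$3 = y$3"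
  by (simp add: vec_eq_iff forall_3)

lemma s1_FB: "burau_s1 \<in> formal_burau"
proof -
  have inv: "invertible burau_s1"
    unfolding invertible_def
    apply (rule exI[of _ "mat3 0 1 0 lt_inv (1 - lt_inv) 0 0 0 1"])
    apply (simp add: mat_eq3 mm33 burau_s1_def algebra_simps)
    done
  have v: "vrow v* burau_s1 = vrow"
    by (simp add: vec_eq3 vm3 vrow_def burau_s1_def algebra_simps power2_eq_square power3_eq_cube)
  have o: "burau_s1 *v ones3 = ones3"
    by (simp add: vec_eq3 mv3 ones3_def burau_s1_def algebra_simps)
  have J: "mat_bar burau_s1 ** J3 ** transpose burau_s1 = J3"
    apply (simp add: mat_eq3 mm33 burau_s1_def J3_def mat_bar_def transpose_def algebra_simps)
    done
  show ?thesis using inv v o J by (simp add: formal_burau_def)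
qed


lemma lookup_mult_laurent: "Poly_Mapping.lookup ((f::laurent) * g) k = Sum_any (\<lambda>l. Poly_Mapping.lookup f l * Poly_Mapping.lookup g (k - l))"
proof -
  have "\<And>l::int. Sum_any (\<lambda>q::int. Poly_Mapping.lookup g q when k = l + q) = Sum_any (\<lambda>q. Poly_Mapping.lookup g q when q = k - l)"
    by (rule Sum_any.cong) (auto simp: when_def)
  then show ?thesis by (simp add: lookup_mult)
qed

lemma lbar_mult [simp]: "lbar (a * b) = lbar a * lbar b"
proof (rule poly_mapping_eqI)
  fix k
  have "Poly_Mapping.lookup (lbar (a * b)) k = Sum_any (\<lambda>l. Poly_Mapping.lookup a l * Poly_Mapping.lookup b (- k - l))"
    by (simp add: lbar.rep_eq lookup_mult_laurent)
  also have "\<dots> = Sum_any (\<lambda>l. Poly_Mapping.lookup a (- l) * Poly_Mapping.lookup b (l - k))"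
    by (rule Sum_any.reindex_cong[where l = uminus]) (auto simp: bij_def fun_eq_iff)
  also have "\<dots> = Poly_Mapping.lookup (lbar a * lbar b) k"
    by (simp add: lbar.rep_eq lookup_mult_laurent)
  finally show "Poly_Mapping.lookup (lbar (a * b)) k = Poly_Mapping.lookup (lbar a * lbar b) k" .
qed

lemma mat_bar_mult: "mat_bar (A ** B) = mat_bar A ** mat_bar B"
  by (simp add: mat_eq3 mm33 mat_bar_def)

lemma mat_bar_one [simp]: "mat_bar (mat 1) = mat 1"
  by (simp add: mat_eq3 mat_bar_def)

lemma FB_mult: assumes "A \<in> formal_burau" "B \<in> formal_burau" shows "A ** B \<in> formal_burau"
proof -
  have J: "mat_bar (A ** B) ** J3 ** transpose (A ** B) = J3"
  proof -
    have "mat_bar (A ** B) ** J3 ** transpose (A ** B) = mat_bar A ** (mat_bar B ** J3 ** transpose B) ** transpose A"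
      by (simp add: mat_bar_mult matrix_transpose_mul matrix_mul_assoc)
    also have "\<dots> = J3" using assms by (simp add: formal_burau_def)
    finally show ?thesis .
  qed
  show ?thesis using assms J
    by (simp add: formal_burau_def invertible_mult flip: vector_matrix_mul_assoc matrix_vector_mul_assoc)
qed

lemma FB_inv: assumes "A \<in> formal_burau" "A ** B = mat 1" "B ** A = mat 1" shows "B \<in> formal_burau"
proof -
  have J: "mat_bar B ** J3 ** transpose B = J3"
  proof -
    have "mat_bar B ** J3 ** transpose B = mat_bar B ** (mat_bar A ** J3 ** transpose A) ** transpose B"
      using assms by (simp add: formal_burau_def)
    also have "\<dots> = mat_bar (B ** A) ** J3 ** transpose (B ** A)"
      by (simp add: mat_bar_mult matrix_transpose_mul matrix_mul_assoc)
    also have "\<dots> = J3" using assms by simp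
    finally show ?thesis .
  qed
  have v: "vrow v* B = vrow"
  proof -
    have "vrow v* B = (vrow v* A) v* B" using assms by (simp add: formal_burau_def)
    also have "\<dots> = vrow" using assms by (simp add: vector_matrix_mul_assoc)
    finally show ?thesis .
  qed
  have o: "B *v ones3 = ones3"
  proof -
    have "B *v ones3 = B *v (A *v ones3)" using assms by (simp add: formal_burau_def)
    also have "\<dots> = ones3" using assms by (simp add: matrix_vector_mul_assoc)
    finally show ?thesis .
  qed
  have "invertible B" using assms unfolding invertible_def by blast
  then show ?thesis using J v o by (simp add: formal_burau_def)
qed

lemma s2_FB: "burau_s2 \<in> formal_burau"
proof -
  have inv: "invertible burau_s2"
    unfolding invertible_def
    apply (rule exI[of _ "mat3 1 0 0 0 0 1 0 lt_inv (1 - lt_inv)"])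
    apply (simp add: mat_eq3 mm33 burau_s2_def algebra_simps)
    done
  have v: "vrow v* burau_s2 = vrow"
    by (simp add: vec_eq3 vm3 vrow_def burau_s2_def algebra_simps power2_eq_square power3_eq_cube)
  have o: "burau_s2 *v ones3 = ones3"
    by (simp add: vec_eq3 mv3 ones3_def burau_s2_def algebra_simps)
  have J: "mat_bar burau_s2 ** J3 ** transpose burau_s2 = J3"
    by (simp add: mat_eq3 mm33 burau_s2_def J3_def mat_bar_def transpose_def algebra_simps)
  show ?thesis using inv v o J by (simp add: formal_burau_def)
qed


definition ss :: laurent where "ss = 1 + lt + lt^2"

lemma Mf_mult: "Mf l x ** Mf l' x' = Mf (l * l') (l * x' + x * l' + x * x' * ss)"
  by (simp add: mat_eq3 mm33 Mf_def uvec_def ss_def algebra_simps power2_eq_square)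

lemma Mf_ones: "Mf l x *v ones3 = ones3 \<Longrightarrow> l + x * ss = 1"
  by (simp add: vec_eq3 mv3 Mf_def uvec_def ss_def ones3_def algebra_simps power2_eq_square)

lemma Mf_left: "(Mf l x ** X) $ i $ j = l * X$i$j + x * (uvec v* X)$j"
  using exhaust_3[of i] by (auto simp add: mm33 vm3 Mf_def algebra_simps)

lemma Mf_right: "(X ** Mf l x) $ i $ j = l * X$i$j + x * (X *v ones3)$i * uvec$j"
  using exhaust_3[of j] by (auto simp add: mm33 mv3 Mf_def ones3_def algebra_simps)

lemma FB_uvec: assumes "X \<in> formal_burau" shows "uvec v* X = uvec"
proof -
  have "lt * (uvec v* X)$j = lt * uvec$j" for j
  proof -
    have "lt * (uvec v* X)$j = (vrow v* X)$j"
      by (simp add: vm3 vrow_def uvec_def algebra_simps power2_eq_square power3_eq_cube)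
    also have "\<dots> = vrow$j" using assms by (simp add: formal_burau_def)
    also have "\<dots> = lt * uvec$j"
      using exhaust_3[of j] by (auto simp: vrow_def uvec_def power2_eq_square power3_eq_cube)
    finally show ?thesis .
  qed
  then show ?thesis by (simp add: vec_eq_iff)
qed

lemma ones3_nth [simp]: "ones3 $ i = 1"
  using exhaust_3[of i] by (auto simp: ones3_def)

lemma Mf_comm: assumes "X \<in> formal_burau" shows "Mf l x ** X = X ** Mf l x"
proof -
  have "X *v ones3 = ones3" using assms by (simp add: formal_burau_def)
  then show ?thesis using FB_uvec[OF assms] by (simp add: vec_eq_iff Mf_left Mf_right)
qed

lemma Delta_Mf: "burau_Delta = Mf (lt^3) (1 - lt)"
  by (simp add: burau_Delta_def mat_eq3 mm33 burau_s1_def burau_s2_def Mf_def uvec_def algebra_simps power2_eq_square power3_eq_cube)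



definition hi :: "laurent \<Rightarrow> int" where "hi p = Max (Poly_Mapping.keys p)"
definition lo :: "laurent \<Rightarrow> int" where "lo p = Min (Poly_Mapping.keys p)"

lemma hi_in: "p \<noteq> 0 \<Longrightarrow> hi p \<in> Poly_Mapping.keys p"
  unfolding hi_def by (rule Max_in) auto
lemma lo_in: "p \<noteq> 0 \<Longrightarrow> lo p \<in> Poly_Mapping.keys p"
  unfolding lo_def by (rule Min_in) auto
lemma hi_ge: "k \<in> Poly_Mapping.keys p \<Longrightarrow> k \<le> hi p"
  unfolding hi_def by (rule Max_ge) auto
lemma lo_le: "k \<in> Poly_Mapping.keys p \<Longrightarrow> lo p \<le> k"
  unfolding lo_def by (rule Min_le) auto
lemma hi_eqI: "k \<in> Poly_Mapping.keys p \<Longrightarrow> (\<And>j. j \<in> Poly_Mapping.keys p \<Longrightarrow> j \<le> k) \<Longrightarrow> hi p = k"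
  unfolding hi_def by (rule Max_eqI) auto
lemma lo_eqI: "k \<in> Poly_Mapping.keys p \<Longrightarrow> (\<And>j. j \<in> Poly_Mapping.keys p \<Longrightarrow> k \<le> j) \<Longrightarrow> lo p = k"
  unfolding lo_def by (rule Min_eqI) auto

lemma not_key: "j \<notin> Poly_Mapping.keys p \<Longrightarrow> Poly_Mapping.lookup p j = 0"
  by (simp add: in_keys_iff)

lemma mult_coeff_extreme:
  fixes f g :: laurent
  assumes "\<And>l. l \<noteq> a \<Longrightarrow> Poly_Mapping.lookup f l * Poly_Mapping.lookup g (a + b - l) = 0"
  shows "Poly_Mapping.lookup (f * g) (a + b) = Poly_Mapping.lookup f a * Poly_Mapping.lookup g b"
proof -
  have "Poly_Mapping.lookup (f * g) (a + b) = Sum_any (\<lambda>l. Poly_Mapping.lookup f l * Poly_Mapping.lookup g (a + b - l))"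
    by (rule lookup_mult_laurent)
  also have "\<dots> = Sum_any (\<lambda>l. Poly_Mapping.lookup f l * Poly_Mapping.lookup g (a + b - l) when l = a)"
    by (rule Sum_any.cong) (use assms in \<open>auto simp: when_def\<close>)
  also have "\<dots> = Poly_Mapping.lookup f a * Poly_Mapping.lookup g b" by simp
  finally show ?thesis .
qed

lemma mult_hi_coeff:
  fixes f g :: laurent
  assumes "f \<noteq> 0" "g \<noteq> 0"
  shows "Poly_Mapping.lookup (f * g) (hi f + hi g) = Poly_Mapping.lookup f (hi f) * Poly_Mapping.lookup g (hi g)"
proof (rule mult_coeff_extreme)
  fix l assume "l \<noteq> hi f"
  show "Poly_Mapping.lookup f l * Poly_Mapping.lookup g (hi f + hi g - l) = 0"
  proof (cases "l \<in> Poly_Mapping.keys f")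
    case True
    then have "l < hi f" using hi_ge[of l f] \<open>l \<noteq> hi f\<close> by simp
    then have "hi f + hi g - l \<notin> Poly_Mapping.keys g" using hi_ge[of "hi f + hi g - l" g] by auto
    then show ?thesis by (simp add: not_key)
  next
    case False then show ?thesis by (simp add: not_key)
  qed
qed

lemma mult_lo_coeff:
  fixes f g :: laurent
  assumes "f \<noteq> 0" "g \<noteq> 0"
  shows "Poly_Mapping.lookup (f * g) (lo f + lo g) = Poly_Mapping.lookup f (lo f) * Poly_Mapping.lookup g (lo g)"
proof (rule mult_coeff_extreme)
  fix l assume "l \<noteq> lo f"
  show "Poly_Mapping.lookup f l * Poly_Mapping.lookup g (lo f + lo g - l) = 0"
  proof (cases "l \<in> Poly_Mapping.keys f")
    case True
    then have "l > lo f" using lo_le[of l f] \<open>l \<noteq> lo f\<close> by simp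
    then have "lo f + lo g - l \<notin> Poly_Mapping.keys g" using lo_le[of "lo f + lo g - l" g] by auto
    then show ?thesis by (simp add: not_key)
  next
    case False then show ?thesis by (simp add: not_key)
  qed
qed

lemma hi_mult:
  fixes f g :: laurent
  assumes "f \<noteq> 0" "g \<noteq> 0"
  shows "hi (f * g) = hi f + hi g"
proof (rule hi_eqI)
  show "hi f + hi g \<in> Poly_Mapping.keys (f * g)"
    using mult_hi_coeff[OF assms] hi_in[OF assms(1)] hi_in[OF assms(2)] by (simp add: in_keys_iff)
next
  fix j assume "j \<in> Poly_Mapping.keys (f * g)"
  then obtain a b where "j = a + b" "a \<in> Poly_Mapping.keys f" "b \<in> Poly_Mapping.keys g"
    using keys_mult by blast
  then show "j \<le> hi f + hi g" using hi_ge[of a f] hi_ge[of b g] by simp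
qed

lemma lo_mult:
  fixes f g :: laurent
  assumes "f \<noteq> 0" "g \<noteq> 0"
  shows "lo (f * g) = lo f + lo g"
proof (rule lo_eqI)
  show "lo f + lo g \<in> Poly_Mapping.keys (f * g)"
    using mult_lo_coeff[OF assms] lo_in[OF assms(1)] lo_in[OF assms(2)] by (simp add: in_keys_iff)
next
  fix j assume "j \<in> Poly_Mapping.keys (f * g)"
  then obtain a b where "j = a + b" "a \<in> Poly_Mapping.keys f" "b \<in> Poly_Mapping.keys g"
    using keys_mult by blast
  then show "lo f + lo g \<le> j" using lo_le[of a f] lo_le[of b g] by simp
qed

lemma lo_le_hi: "p \<noteq> 0 \<Longrightarrow> lo p \<le> hi p"
  using hi_ge[OF lo_in] by blast

lemma monomial_of_span0:
  fixes p :: laurent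
  assumes "p \<noteq> 0" "lo p = hi p"
  shows "p = Poly_Mapping.single (hi p) (Poly_Mapping.lookup p (hi p))"
proof (rule poly_mapping_eqI)
  fix j
  show "Poly_Mapping.lookup p j = Poly_Mapping.lookup (Poly_Mapping.single (hi p) (Poly_Mapping.lookup p (hi p))) j"
  proof (cases "j \<in> Poly_Mapping.keys p")
    case True
    then have "j = hi p" using hi_ge[OF True] lo_le[OF True] assms by simp
    then show ?thesis by simp
  next
    case False
    then have "j \<noteq> hi p" using hi_in[OF assms(1)] by auto
    then show ?thesis using False by (simp add: not_key lookup_single when_def)
  qed
qed

lemma laurent_unit:
  fixes f g :: laurent
  assumes "f * g = 1"
  shows "\<exists>k c. f = Poly_Mapping.single k c \<and> (c = 1 \<or> c = -1)"
proof -
  have f0: "f \<noteq> 0" and g0: "g \<noteq> 0" using assms by auto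
  have k1: "Poly_Mapping.keys (f * g) = {0}" using assms by simp
  have "hi (f * g) = 0" unfolding hi_def k1 by simp
  moreover have "lo (f * g) = 0" unfolding lo_def k1 by simp
  ultimately have "hi f + hi g = 0" "lo f + lo g = 0"
    using hi_mult[OF f0 g0] lo_mult[OF f0 g0] by auto
  then have e: "lo f = hi f" "lo g = hi g" using lo_le_hi[OF f0] lo_le_hi[OF g0] by auto
  have "Poly_Mapping.lookup f (hi f) * Poly_Mapping.lookup g (hi g) = 1"
    using mult_hi_coeff[OF f0 g0] \<open>hi f + hi g = 0\<close> assms by simp
  then have "Poly_Mapping.lookup f (hi f) = 1 \<or> Poly_Mapping.lookup f (hi f) = -1"
    using zmult_eq_1_iff by blast
  then show ?thesis using monomial_of_span0[OF f0 e(1)] by blast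
qed



lemma single_mult1: "Poly_Mapping.single a (1::int) * Poly_Mapping.single b c = Poly_Mapping.single (a + b) c"
  by (simp add: mult_single)

lemma lt_pow: "lt ^ n = Poly_Mapping.single (int n) 1"
  by (induction n) (auto simp: lt_def mult_single add.commute)

lemma ss_single: "ss = Poly_Mapping.single 0 1 + Poly_Mapping.single 1 1 + Poly_Mapping.single 2 1"
  using lt_pow[of 2] by (simp add: ss_def lt_def)

lemma lookup_ss: "Poly_Mapping.lookup ss j = (if j = 0 \<or> j = 1 \<or> j = 2 then 1 else 0)"
  by (auto simp: ss_single lookup_add lookup_single lookup_one when_def)

lemma ss_nz: "ss \<noteq> 0" using lookup_ss[of 0] by auto

lemma hi_ss: "hi ss = 2"
  by (rule hi_eqI) (auto simp: in_keys_iff lookup_ss split: if_splits)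
lemma lo_ss: "lo ss = 0"
  by (rule lo_eqI) (auto simp: in_keys_iff lookup_ss split: if_splits)

lemma ss_one_minus: "ss * (1 - lt) = 1 - Poly_Mapping.single 3 1"
proof -
  have "ss * (1 - lt) = 1 - lt^3" by (simp add: ss_def algebra_simps power2_eq_square power3_eq_cube)
  then show ?thesis using lt_pow[of 3] by simp
qed

lemma ring_h1: "(s::'a::comm_ring_1) * (y + a * b) = s * y + a * (s * b)"
  by (simp add: algebra_simps)
lemma ring_h2: "(s::'a::comm_ring_1) * (- (a * y)) = - (a * (s * y))"
  by (simp add: algebra_simps)

lemma pow3_nat: "\<exists>y. ss * y = 1 - Poly_Mapping.single (3 * int n) (1::int)"
proof (induction n)
  case 0 then show ?case by (intro exI[of _ 0]) simp
next
  case (Suc n)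
  then obtain y where y: "ss * y = 1 - Poly_Mapping.single (3 * int n) 1" by blast
  have "ss * (y + Poly_Mapping.single (3 * int n) 1 * (1 - lt))
     = (1 - Poly_Mapping.single (3 * int n) 1) + Poly_Mapping.single (3 * int n) 1 * (1 - Poly_Mapping.single 3 1)"
    unfolding ring_h1 y ss_one_minus ..
  also have "\<dots> = 1 - Poly_Mapping.single (3 * int n) 1 * Poly_Mapping.single 3 1"
    by (simp add: right_diff_distrib)
  also have "\<dots> = 1 - Poly_Mapping.single (3 * int (Suc n)) 1"
    unfolding single_mult1 by (simp add: algebra_simps)
  finally show ?case by blast
qed

lemma pow3: "\<exists>y. ss * y = 1 - Poly_Mapping.single (3 * m) (1::int)"
proof (cases "m \<ge> 0")
  case True
  then have "m = int (nat m)" by simp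
  then show ?thesis using pow3_nat[of "nat m"] by metis
next
  case False
  define n where "n = nat (- m)"
  then have n: "m = - int n" using False by simp
  obtain y where y: "ss * y = 1 - Poly_Mapping.single (3 * int n) 1" using pow3_nat by blast
  have "ss * (- (Poly_Mapping.single (3 * m) 1 * y)) = - (Poly_Mapping.single (3 * m) 1 * (1 - Poly_Mapping.single (3 * int n) 1))"
    unfolding ring_h2 y ..
  also have "\<dots> = Poly_Mapping.single (3 * m) 1 * Poly_Mapping.single (3 * int n) 1 - Poly_Mapping.single (3 * m) 1"
    by (simp add: right_diff_distrib)
  also have "\<dots> = 1 - Poly_Mapping.single (3 * m) 1"
    unfolding single_mult1 using n by simp
  finally show ?thesis by blast
qed

lemma ss_dvd_case:
  fixes z :: laurent and r c :: int
  assumes z: "ss * z = 1 - Poly_Mapping.single r c" and r: "0 \<le> r" "r < 3" and c: "c = 1 \<or> c = -1"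
  shows "r = 0 \<and> c = 1"
proof (rule ccontr)
  assume nt: "\<not> (r = 0 \<and> c = 1)"
  define w where "w = 1 - Poly_Mapping.single r c"
  have lw: "Poly_Mapping.lookup w j = (if j = 0 then 1 else 0) - (if j = r then c else 0)" for j
    by (auto simp: w_def lookup_minus lookup_one lookup_single when_def)
  have w0: "w \<noteq> 0"
  proof
    assume "w = 0"
    then have "Poly_Mapping.lookup w 0 = 0" by simp
    then show False using lw[of 0] nt c by (auto split: if_splits)
  qed
  have z0: "z \<noteq> 0" using z w0 w_def by auto
  have hw: "hi w \<le> r"
    using hi_in[OF w0] lw[of "hi w"] r by (auto simp: in_keys_iff split: if_splits)
  have lw0: "lo w \<ge> 0"
    using lo_in[OF w0] lw[of "lo w"] r by (auto simp: in_keys_iff split: if_splits)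
  have hz: "hi w = 2 + hi z" and lz: "lo w = lo z"
    using hi_mult[OF ss_nz z0] lo_mult[OF ss_nz z0] z hi_ss lo_ss w_def by auto
  have "lo z \<le> hi z" using lo_le_hi[OF z0] .
  then have r2: "r = 2" "hi w = 2" "lo w = 0" "hi z = 0" "lo z = 0" using hw lw0 hz lz r by auto
  have zs: "z = Poly_Mapping.single 0 (Poly_Mapping.lookup z 0)"
    using monomial_of_span0[OF z0] r2 by simp
  have d0: "Poly_Mapping.lookup z 0 \<noteq> 0" using z0 zs by (metis single_zero)
  have "Poly_Mapping.lookup (ss * z) 1 = Poly_Mapping.lookup z 0"
    by (subst zs) (simp add: ss_single algebra_simps mult_single lookup_add lookup_single when_def)
  moreover have "Poly_Mapping.lookup (ss * z) 1 = 0" using z lw[of 1] r2 w_def by simp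
  ultimately show False using d0 by simp
qed

lemma ring_h3: "(s::'a::comm_ring_1) * (a * (x - y)) = a * (s * x - s * y)"
  by (simp add: algebra_simps)

lemma ss_dvd:
  fixes x :: laurent
  assumes x: "ss * x = 1 - Poly_Mapping.single k c" and c: "c = 1 \<or> c = -1"
  shows "c = 1 \<and> 3 dvd k"
proof -
  define m where "m = k div 3"
  define r where "r = k mod 3"
  have k: "k = 3 * m + r" and r: "0 \<le> r" "r < 3" by (auto simp: m_def r_def)
  obtain y where y: "ss * y = 1 - Poly_Mapping.single (3 * m) (1::int)" using pow3 by blast
  have "ss * (Poly_Mapping.single (- 3 * m) 1 * (x - y))
      = Poly_Mapping.single (- 3 * m) 1 * ((1 - Poly_Mapping.single k c) - (1 - Poly_Mapping.single (3 * m) 1))"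
    unfolding ring_h3 x y ..
  also have "\<dots> = Poly_Mapping.single (- 3 * m) 1 * Poly_Mapping.single (3 * m) 1 - Poly_Mapping.single (- 3 * m) 1 * Poly_Mapping.single k c"
    by (simp add: right_diff_distrib)
  also have "\<dots> = 1 - Poly_Mapping.single r c"
    unfolding single_mult1 using k by simp
  finally have "r = 0 \<and> c = 1" using ss_dvd_case r c by blast
  then show ?thesis using k by simp
qed



lemma Mf_one: "Mf 1 0 = mat 1"
  by (simp add: mat_eq3 Mf_def)

lemma mat1_FB: "mat 1 \<in> formal_burau"
proof -
  have "invertible (mat 1 :: lmat)" unfolding invertible_def by (intro exI[of _ "mat 1"]) simp
  then show ?thesis by (simp add: formal_burau_def)
qed

lemma ring_h4:
  fixes s :: "'a::comm_ring_1"
  assumes "s * y = 1 - l" "s * y' = 1 - l'"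
  shows "s * (l * y' + y * l' + y * y' * s) = 1 - l * l'"
proof -
  have "s * (l * y' + y * l' + y * y' * s) = l * (s * y') + (s * y) * l' + (s * y) * (s * y')"
    by (simp add: algebra_simps)
  also have "\<dots> = l * (1 - l') + (1 - l) * l' + (1 - l) * (1 - l')" using assms by simp
  also have "\<dots> = 1 - l * l'" by (simp add: algebra_simps)
  finally show ?thesis .
qed

lemma Mf_pow_in:
  assumes a: "Mf a ya \<in> G" "ss * ya = 1 - a" and G: "mat 1 \<in> G" "\<And>P Q. P \<in> G \<Longrightarrow> Q \<in> G \<Longrightarrow> P ** Q \<in> G"
  shows "\<exists>y. Mf (a ^ n) y \<in> G \<and> ss * y = 1 - a ^ n"
proof (induction n)
  case 0 then show ?case using G Mf_one by (intro exI[of _ 0]) simp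
next
  case (Suc n)
  then obtain y where y: "Mf (a ^ n) y \<in> G" "ss * y = 1 - a ^ n" by blast
  have "Mf (a ^ n) y ** Mf a ya \<in> G" using G y a by blast
  moreover have "ss * (a ^ n * ya + y * a + y * ya * ss) = 1 - a ^ Suc n"
    using ring_h4[OF y(2) a(2)] by (simp add: mult.commute)
  ultimately show ?case unfolding Mf_mult by (auto simp: mult.commute)
qed

lemma single_pow: "Poly_Mapping.single k (1::int) ^ n = Poly_Mapping.single (k * int n) 1"
  by (induction n) (auto simp: mult_single algebra_simps)

lemma Mf_mult_inv:
  assumes "ss * y = 1 - l" "ss * y' = 1 - l'" "l * l' = 1"
  shows "Mf l y ** Mf l' y' = mat 1"
proof -
  have "ss * (l * y' + y * l' + y * y' * ss) = 0" using ring_h4[OF assms(1,2)] assms(3) by simp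
  then have "l * y' + y * l' + y * y' * ss = 0" using ss_nz by simp
  then show ?thesis using assms(3) by (simp add: Mf_mult Mf_one)
qed

lemma gen_Delta_elems: "\<exists>y. Mf (Poly_Mapping.single (3 * m) 1) y \<in> gen_subgroup {burau_Delta}
   \<and> ss * y = 1 - Poly_Mapping.single (3 * m) 1"
proof -
  let ?G = "gen_subgroup {burau_Delta}"
  have G: "mat 1 \<in> ?G" "\<And>P Q. P \<in> ?G \<Longrightarrow> Q \<in> ?G \<Longrightarrow> P ** Q \<in> ?G"
    by (auto intro: gen_subgroup.intros)
  have D: "Mf (Poly_Mapping.single 3 1) (1 - lt) \<in> ?G" "ss * (1 - lt) = 1 - Poly_Mapping.single 3 1"
    using Delta_Mf lt_pow[of 3] ss_one_minus by (auto intro: gen_subgroup.intros)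
  show ?thesis
  proof (cases "m \<ge> 0")
    case True
    obtain y where "Mf (Poly_Mapping.single 3 1 ^ nat m) y \<in> ?G \<and> ss * y = 1 - Poly_Mapping.single 3 1 ^ nat m"
      using Mf_pow_in[OF D G] by blast
    then show ?thesis using True by (simp add: single_pow, blast)
  next
    case False
    obtain yi where yi: "ss * yi = 1 - Poly_Mapping.single (3 * (-1)) (1::int)" using pow3 by blast
    have yi': "ss * yi = 1 - Poly_Mapping.single (- 3) (1::int)" using yi by simp
    have m1: "Mf (Poly_Mapping.single 3 1) (1 - lt) ** Mf (Poly_Mapping.single (- 3) 1) yi = mat 1"
      by (rule Mf_mult_inv[OF D(2) yi']) (simp add: mult_single)
    have m2: "Mf (Poly_Mapping.single (- 3) 1) yi ** Mf (Poly_Mapping.single 3 1) (1 - lt) = mat 1"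
      by (rule Mf_mult_inv[OF yi' D(2)]) (simp add: mult_single)
    have Di: "Mf (Poly_Mapping.single (- 3) 1) yi \<in> ?G"
      by (rule gen_inv[OF D(1) m1 m2])
    obtain y where "Mf (Poly_Mapping.single (- 3) 1 ^ nat (- m)) y \<in> ?G \<and> ss * y = 1 - Poly_Mapping.single (- 3) 1 ^ nat (- m)"
      using Mf_pow_in[OF Di yi' G] by blast
    then show ?thesis using False by (simp add: single_pow, blast)
  qed
qed




lemma comm_inv:
  fixes A B S :: lmat
  assumes "A ** B = mat 1" "B ** A = mat 1" "A ** S = S ** A"
  shows "B ** S = S ** B"
proof -
  have "B ** S = B ** S ** (A ** B)" using assms by simp
  also have "\<dots> = B ** (S ** A) ** B" by (simp add: matrix_mul_assoc)
  also have "\<dots> = B ** (A ** S) ** B" using assms by simp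
  also have "\<dots> = (B ** A) ** S ** B" by (simp add: matrix_mul_assoc)
  also have "\<dots> = S ** B" using assms by simp
  finally show ?thesis .
qed

lemma key:
  assumes A: "A \<in> formal_burau" and c1: "A ** burau_s1 = burau_s1 ** A" and c2: "A ** burau_s2 = burau_s2 ** A"
  shows "A \<in> gen_subgroup {burau_Delta}"
proof -
  define l x where "l = A$1$1 - A$2$1" and "x = A$2$1"
  have Af: "A = Mf l x" using commute_form[OF c1 c2] l_def x_def by simp
  have lx: "l + x * ss = 1" using A Af Mf_ones by (simp add: formal_burau_def)
  obtain B where B: "A ** B = mat 1" "B ** A = mat 1" using A by (auto simp: formal_burau_def invertible_def)
  have Bf: "B = Mf (B$1$1 - B$2$1) (B$2$1)"
    using commute_form[OF comm_inv[OF B c1] comm_inv[OF B c2]] .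
  define l' x' where "l' = B$1$1 - B$2$1" and "x' = B$2$1"
  have "A ** B = Mf l x ** Mf l' x'" using Af Bf l'_def x'_def by simp
  then have P: "Mf (l * l') (l * x' + x * l' + x * x' * ss) = mat 1"
    using B(1) Mf_mult by simp
  have e12: "(l * x' + x * l' + x * x' * ss) * lt = 0"
    using arg_cong[OF P, of "\<lambda>M. M$1$2"] by (simp add: Mf_def uvec_def)
  then have "l * x' + x * l' + x * x' * ss = 0" by simp
  then have "l * l' = 1"
    using arg_cong[OF P, of "\<lambda>M. M$1$1"] by (simp add: Mf_def uvec_def)
  then obtain k c where kc: "l = Poly_Mapping.single k c" "c = 1 \<or> c = -1"
    using laurent_unit by blast
  have sx: "ss * x = 1 - l" using lx by (metis add_diff_cancel_left' mult.commute)
  have "ss * x = 1 - Poly_Mapping.single k c" using sx kc by simp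
  then have "c = 1 \<and> 3 dvd k" using ss_dvd kc(2) by blast
  then obtain m where "k = 3 * m" "c = 1" by (auto elim: dvdE)
  then have m: "l = Poly_Mapping.single (3 * m) 1" using kc by simp
  obtain y where y: "Mf (Poly_Mapping.single (3 * m) 1) y \<in> gen_subgroup {burau_Delta}"
      "ss * y = 1 - Poly_Mapping.single (3 * m) 1"
    using gen_Delta_elems by blast
  note sx
  moreover have "ss * y = 1 - l" using y(2) m by simp
  ultimately have "ss * x = ss * y" by simp
  then have "x = y" using ss_nz by simp
  then show ?thesis using Af m y by simp
qed

lemma gen_sub_FB: assumes S: "S \<subseteq> formal_burau" shows "gen_subgroup S \<subseteq> formal_burau"
proof
  fix A assume "A \<in> gen_subgroup S"
  then show "A \<in> formal_burau"
      proof (induction rule: gen_subgroup.induct)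
    case gen_one then show ?case by (rule mat1_FB)
  next
    case (gen_elem s) then show ?case using S by blast
  next
    case (gen_mult a b) then show ?case using FB_mult by blast
  next
    case (gen_inv a b) then show ?case using FB_inv by blast
  qed
qed

definition FBcomm :: "lmat set" where "FBcomm = {A. \<forall>X \<in> formal_burau. A ** X = X ** A}"

lemma gen_sub_comm: assumes S: "S \<subseteq> FBcomm" shows "gen_subgroup S \<subseteq> FBcomm"
proof
  fix A assume "A \<in> gen_subgroup S"
  then show "A \<in> FBcomm"
  proof (induction rule: gen_subgroup.induct)
    case gen_one then show ?case by (simp add: FBcomm_def)
  next
    case (gen_elem s) then show ?case using S by blast
  next
    case (gen_mult a b)
    show ?case unfolding FBcomm_def mem_Collect_eq
    proof (intro ballI)
      fix X assume X: "X \<in> formal_burau"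
      have "a ** b ** X = a ** (b ** X)" by (simp add: matrix_mul_assoc)
      also have "\<dots> = a ** (X ** b)" using gen_mult(4) X unfolding FBcomm_def by (metis (mono_tags, lifting) mem_Collect_eq)
      also have "\<dots> = (a ** X) ** b" by (simp add: matrix_mul_assoc)
      also have "\<dots> = (X ** a) ** b" using gen_mult(3) X unfolding FBcomm_def by (metis (mono_tags, lifting) mem_Collect_eq)
      also have "\<dots> = X ** (a ** b)" by (simp add: matrix_mul_assoc)
      finally show "a ** b ** X = X ** (a ** b)" .
    qed
  next
    case (gen_inv a b)
    show ?case unfolding FBcomm_def mem_Collect_eq
    proof (intro ballI)
      fix X assume X: "X \<in> formal_burau"
      have "a ** X = X ** a" using gen_inv(4) X unfolding FBcomm_def by (metis (mono_tags, lifting) mem_Collect_eq)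
      then show "b ** X = X ** b" using comm_inv[OF gen_inv(2) gen_inv(3)] by blast
    qed
  qed
qed

lemma gen_sub_sub: assumes S: "S \<subseteq> gen_subgroup T" shows "gen_subgroup S \<subseteq> gen_subgroup T"
proof
  fix A assume "A \<in> gen_subgroup S"
  then show "A \<in> gen_subgroup T"
      proof (induction rule: gen_subgroup.induct)
    case gen_one then show ?case by (rule gen_subgroup.gen_one)
  next
    case (gen_elem s) then show ?case using S by blast
  next
    case (gen_mult a b) then show ?case using gen_subgroup.gen_mult by blast
  next
    case (gen_inv a b) then show ?case using gen_subgroup.gen_inv by blast
  qed
qed

theorem corollary3p13:
  shows "mat_center formal_burau = gen_subgroup {burau_Delta}
         \<and> mat_center formal_burau = mat_center (gen_subgroup {burau_s1, burau_s2})"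
proof -
  have s12: "burau_s1 \<in> formal_burau" "burau_s2 \<in> formal_burau" by (rule s1_FB, rule s2_FB)
  have P: "burau_s1 ** burau_s2 ** burau_s1 \<in> formal_burau"
    by (intro FB_mult s12)
  have DFB: "burau_Delta \<in> formal_burau" unfolding burau_Delta_def by (intro FB_mult P)
  have DC: "burau_Delta \<in> FBcomm" unfolding FBcomm_def Delta_Mf mem_Collect_eq
    by (intro ballI Mf_comm)
  have G1FB: "gen_subgroup {burau_Delta} \<subseteq> formal_burau" by (rule gen_sub_FB) (simp add: DFB)
  have G1C: "gen_subgroup {burau_Delta} \<subseteq> FBcomm" by (rule gen_sub_comm) (simp add: DC)
  have G2FB: "gen_subgroup {burau_s1, burau_s2} \<subseteq> formal_burau" by (rule gen_sub_FB) (simp add: s12)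
  have s12G: "burau_s1 \<in> gen_subgroup {burau_s1, burau_s2}" "burau_s2 \<in> gen_subgroup {burau_s1, burau_s2}"
    by (rule gen_subgroup.gen_elem, simp)+
  have DG2: "burau_Delta \<in> gen_subgroup {burau_s1, burau_s2}"
    unfolding burau_Delta_def by (intro gen_subgroup.gen_mult s12G)
  have G12: "gen_subgroup {burau_Delta} \<subseteq> gen_subgroup {burau_s1, burau_s2}"
    by (rule gen_sub_sub) (simp add: DG2)
  have E1: "mat_center formal_burau = gen_subgroup {burau_Delta}"
  proof
    show "mat_center formal_burau \<subseteq> gen_subgroup {burau_Delta}"
    proof
      fix A assume A: "A \<in> mat_center formal_burau"
      then have "A \<in> formal_burau" "A ** burau_s1 = burau_s1 ** A" "A ** burau_s2 = burau_s2 ** A"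
        using s12 unfolding mat_center_def by blast+
      then show "A \<in> gen_subgroup {burau_Delta}" by (rule key)
    qed
    show "gen_subgroup {burau_Delta} \<subseteq> mat_center formal_burau"
    proof
      fix A assume A: "A \<in> gen_subgroup {burau_Delta}"
      then have "A \<in> formal_burau" "A \<in> FBcomm" using G1FB G1C by blast+
      then show "A \<in> mat_center formal_burau" unfolding mat_center_def FBcomm_def by blast
    qed
  qed
  have E2: "mat_center formal_burau = mat_center (gen_subgroup {burau_s1, burau_s2})"
  proof
    show "mat_center formal_burau \<subseteq> mat_center (gen_subgroup {burau_s1, burau_s2})"
    proof
      fix A assume A: "A \<in> mat_center formal_burau"
      then have "A \<in> gen_subgroup {burau_s1, burau_s2}" using E1 G12 by blast
      moreover have "\<forall>X \<in> gen_subgroup {burau_s1, burau_s2}. A ** X = X ** A"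
        using A G2FB unfolding mat_center_def by blast
      ultimately show "A \<in> mat_center (gen_subgroup {burau_s1, burau_s2})"
        unfolding mat_center_def by blast
    qed
    show "mat_center (gen_subgroup {burau_s1, burau_s2}) \<subseteq> mat_center formal_burau"
    proof
      fix A assume A: "A \<in> mat_center (gen_subgroup {burau_s1, burau_s2})"
      then have "A \<in> formal_burau" using G2FB unfolding mat_center_def by blast
      moreover have "A ** burau_s1 = burau_s1 ** A" "A ** burau_s2 = burau_s2 ** A"
        using A s12G unfolding mat_center_def by blast+
      ultimately have "A \<in> gen_subgroup {burau_Delta}" by (rule key)
      then show "A \<in> mat_center formal_burau" using E1 by simp
    qed
  qed
  show ?thesis using E1 E2 by blast
qed

end
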